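(* For all $M>0$ and $B>0$ there exists $C(M,B)>0$ with the following property: if for some $\varepsilon\in(\varepsilon_j)_{j\in\mathbb N}$ and $T\in(0,\infty]$ the classical solution $u_\varepsilon$ of the regularized problem satisfies $$u_{0\varepsilon}\le M\ \text{in }\Omega\qquad\text{and}\qquad\int_0^T\int_\Omega|\nabla u_\varepsilon|^2\le B,$$ then $u_\varepsilon\le C(M,B)$ in $\Omega\times[0,T)$.
   Context: $\Omega\subset\mathbb{R}^N$ is a bounded smooth domain; $(\varepsilon_j)\subset(0,1)$ decreases to $0$; $\rho_\varepsilon(z):=\min\{z,1/\varepsilon\}$; $(u_{0\varepsilon})_{\varepsilon\in(\varepsilon_j)}\subset C^3(\bar\Omega)$ with $u_{0\varepsilon}\ge\varepsilon$ in $\Omega$, $u_{0\varepsilon}=\varepsilon$ and $\Delta u_{0\varepsilon}=-\int_\Omega|\nabla u_{0\varepsilon}|^2$ on $\partial\Omega$. $u_\varepsilon\in C^{2,1}(\bar\Omega\times[0,\infty))$ denotes the classical solution of $u_{\varepsilon t}=u_\varepsilon\Delta u_\varepsilon+u_\varepsilon\rho_\varepsilon(\int_\Omega|\nabla u_\varepsilon|^2)$ in $\Omega\times(0,\infty)$, $u_\varepsilon=\varepsilon$ on $\partial\Omega$, $u_\varepsilon(\cdot,0)=u_{0\varepsilon}$. The constant $C(M,B)$ does not depend on $\varepsilon$ or $T$. *)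

theory Defs
  imports "HOL-Analysis.Analysis"
begin

definition pd :: "'n::finite \<Rightarrow> (real^'n \<Rightarrow> real) \<Rightarrow> real^'n \<Rightarrow> real" where
  "pd i f x = deriv (\<lambda>s. f (x + s *\<^sub>R axis i 1)) 0"

primrec iter_pd :: "'n::finite list \<Rightarrow> (real^'n \<Rightarrow> real) \<Rightarrow> real^'n \<Rightarrow> real" where
  "iter_pd [] f = f"
| "iter_pd (i # is) f = pd i (iter_pd is f)"

definition grad :: "(real^'n::finite \<Rightarrow> real) \<Rightarrow> real^'n \<Rightarrow> real^'n" where
  "grad f x = (\<chi> i. pd i f x)"

definition lap :: "(real^'n::finite \<Rightarrow> real) \<Rightarrow> real^'n \<Rightarrow> real" where
  "lap f x = (\<Sum>i\<in>UNIV. pd i (pd i f) x)"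

definition smooth_on :: "(real^'n::finite) set \<Rightarrow> (real^'n \<Rightarrow> real) \<Rightarrow> bool" where
  "smooth_on U f \<longleftrightarrow> (\<forall>is. \<forall>x\<in>U. iter_pd is f differentiable at x)"

definition smooth_bounded_domain :: "(real^'n::finite) set \<Rightarrow> bool" where
  "smooth_bounded_domain \<Omega> \<longleftrightarrow> open \<Omega> \<and> connected \<Omega> \<and> bounded \<Omega> \<and> \<Omega> \<noteq> {} \<and>
     (\<forall>x0\<in>frontier \<Omega>. \<exists>r>0. \<exists>\<phi>. smooth_on (ball x0 r) \<phi> \<and>
        (\<forall>x\<in>ball x0 r. x \<in> \<Omega> \<longleftrightarrow> \<phi> x < 0) \<and>
        (\<forall>x\<in>ball x0 r. \<phi> x = 0 \<longrightarrow> grad \<phi> x \<noteq> 0))"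

definition Ck_closure :: "nat \<Rightarrow> (real^'n::finite) set \<Rightarrow> (real^'n \<Rightarrow> real) \<Rightarrow> bool" where
  "Ck_closure k \<Omega> f \<longleftrightarrow> continuous_on (closure \<Omega>) f \<and>
     (\<forall>is. length is < k \<longrightarrow> (\<forall>x\<in>\<Omega>. iter_pd is f differentiable at x)) \<and>
     (\<forall>is. length is \<le> k \<longrightarrow>
        (\<exists>g. continuous_on (closure \<Omega>) g \<and> (\<forall>x\<in>\<Omega>. g x = iter_pd is f x)))"

definition C21 :: "(real^'n::finite) set \<Rightarrow> (real^'n \<Rightarrow> real \<Rightarrow> real) \<Rightarrow> bool" where
  "C21 \<Omega> u \<longleftrightarrow> continuous_on (closure \<Omega> \<times> {0..}) (\<lambda>p. u (fst p) (snd p)) \<and>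
     (\<forall>x\<in>\<Omega>. \<forall>t>0. u x differentiable at t) \<and>
     (\<exists>g. continuous_on (closure \<Omega> \<times> {0..}) g \<and>
        (\<forall>x\<in>\<Omega>. \<forall>t>0. g (x, t) = deriv (u x) t)) \<and>
     (\<forall>is. length is < 2 \<longrightarrow>
        (\<forall>x\<in>\<Omega>. \<forall>t>0. iter_pd is (\<lambda>y. u y t) differentiable at x)) \<and>
     (\<forall>is. length is \<le> 2 \<longrightarrow>
        (\<exists>g. continuous_on (closure \<Omega> \<times> {0..}) g \<and>
           (\<forall>x\<in>\<Omega>. \<forall>t>0. g (x, t) = iter_pd is (\<lambda>y. u y t) x)))"

definition dirichlet :: "(real^'n::finite) set \<Rightarrow> (real^'n \<Rightarrow> real) \<Rightarrow> real" where
  "dirichlet \<Omega> f = integral \<Omega> (\<lambda>x. (norm (grad f x))\<^sup>2)"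

definition rho :: "real \<Rightarrow> real \<Rightarrow> real" where
  "rho \<epsilon> z = min z (1 / \<epsilon>)"

definition init_ok :: "(real^'n::finite) set \<Rightarrow> real \<Rightarrow> (real^'n \<Rightarrow> real) \<Rightarrow> bool" where
  "init_ok \<Omega> \<epsilon> u0 \<longleftrightarrow> Ck_closure 3 \<Omega> u0 \<and> (\<forall>x\<in>\<Omega>. u0 x \<ge> \<epsilon>) \<and>
     (\<forall>x\<in>frontier \<Omega>. u0 x = \<epsilon> \<and>
        ((\<lambda>y. lap u0 y) \<longlongrightarrow> - dirichlet \<Omega> u0) (at x within \<Omega>))"

definition classical_sol ::
  "(real^'n::finite) set \<Rightarrow> real \<Rightarrow> (real^'n \<Rightarrow> real) \<Rightarrow> (real^'n \<Rightarrow> real \<Rightarrow> real) \<Rightarrow> bool" where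
  "classical_sol \<Omega> \<epsilon> u0 u \<longleftrightarrow> C21 \<Omega> u \<and>
     (\<forall>x\<in>\<Omega>. \<forall>t>0. deriv (u x) t =
         u x t * lap (\<lambda>y. u y t) x + u x t * rho \<epsilon> (dirichlet \<Omega> (\<lambda>y. u y t))) \<and>
     (\<forall>x\<in>frontier \<Omega>. \<forall>t\<ge>0. u x t = \<epsilon>) \<and>
     (\<forall>x\<in>closure \<Omega>. u x 0 = u0 x)"

end

theory Submission
  imports Defs
begin

lemma dir_deriv:
  fixes f :: "real^'n::finite \<Rightarrow> real"
  assumes "(f has_derivative f') (at (a + s *\<^sub>R v))"
  shows "((\<lambda>r. f (a + r *\<^sub>R v)) has_real_derivative f' v) (at s)"
proof -
  have l: "((\<lambda>r. a + r *\<^sub>R v) has_derivative (\<lambda>h. h *\<^sub>R v)) (at s)"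
    by (auto intro!: derivative_eq_intros)
  have "((\<lambda>r. f (a + r *\<^sub>R v)) has_derivative (\<lambda>h. f' (h *\<^sub>R v))) (at s)"
    using has_derivative_compose[OF l assms] by simp
  moreover have "(\<lambda>h. f' (h *\<^sub>R v)) = (*) (f' v)"
  proof -
    have "linear f'" using assms has_derivative_linear by blast
    then show ?thesis using linear_scale[of f'] by (auto simp: fun_eq_iff)
  qed
  ultimately show ?thesis by (simp add: has_field_derivative_def)
qed

lemma pd_eq:
  fixes f :: "real^'n::finite \<Rightarrow> real"
  assumes "(f has_derivative f') (at y)"
  shows "pd i f y = f' (axis i 1)"
proof -
  have "((\<lambda>r. f (y + r *\<^sub>R axis i 1)) has_real_derivative f' (axis i 1)) (at 0)"
    using dir_deriv[of f f' y 0] assms by simp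
  then show ?thesis unfolding pd_def by (rule DERIV_imp_deriv)
qed

lemma pd_line_deriv:
  fixes f :: "real^'n::finite \<Rightarrow> real"
  assumes "f differentiable at (x + s *\<^sub>R axis i 1)"
  shows "((\<lambda>r. f (x + r *\<^sub>R axis i 1)) has_real_derivative pd i f (x + s *\<^sub>R axis i 1)) (at s)"
proof -
  obtain f' where d: "(f has_derivative f') (at (x + s *\<^sub>R axis i 1))"
    using assms differentiable_def by blast
  show ?thesis using dir_deriv[OF d] pd_eq[OF d] by simp
qed

lemma second_deriv_max:
  fixes f :: "real^'n::finite \<Rightarrow> real"
  assumes S: "open S" "x \<in> S" and mx: "\<forall>y\<in>S. f y \<le> f x"
    and df: "\<forall>y\<in>S. f differentiable at y" and dpf: "pd i f differentiable at x"
  shows "pd i (pd i f) x \<le> 0"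
proof (rule ccontr)
  assume "\<not> ?thesis"
  then have cpos: "pd i (pd i f) x > 0" by simp
  obtain r where r: "r > 0" "ball x r \<subseteq> S" using S open_contains_ball by blast
  define e where "e = (axis i 1 :: real^'n)"
  have ne: "norm e = 1" unfolding e_def by simp
  have inS: "x + s *\<^sub>R e \<in> S" if "\<bar>s\<bar> < r" for s
  proof -
    have "dist x (x + s *\<^sub>R e) = \<bar>s\<bar>" using ne by (simp add: dist_norm)
    then show ?thesis using that r by auto
  qed
  define \<phi> where "\<phi> s = f (x + s *\<^sub>R e)" for s
  define \<psi> where "\<psi> s = pd i f (x + s *\<^sub>R e)" for s
  have dphi: "(\<phi> has_real_derivative \<psi> s) (at s)" if "\<bar>s\<bar> < r" for s
    unfolding \<phi>_def \<psi>_def e_def using pd_line_deriv df inS[OF that] e_def by blast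
  have dpsi: "(\<psi> has_real_derivative pd i (pd i f) x) (at 0)"
    using pd_line_deriv[of "pd i f" x 0 i] dpf unfolding \<psi>_def e_def by simp
  have "\<psi> 0 = 0"
  proof (rule DERIV_local_max[OF dphi[of 0] r(1)])
    show "\<forall>y. \<bar>0 - y\<bar> < r \<longrightarrow> \<phi> y \<le> \<phi> 0"
      using inS mx unfolding \<phi>_def by simp
  qed (use r in simp)
  obtain d where d: "d > 0" "\<forall>h>0. h < d \<longrightarrow> \<psi> 0 < \<psi> (0 + h)"
    using DERIV_pos_inc_right[OF dpsi cpos] by blast
  define h where "h = min d r / 2"
  have h: "0 < h" "h < d" "h < r" using d r unfolding h_def by auto
  obtain z where z: "0 < z" "z < h" "\<phi> h - \<phi> 0 = (h - 0) * \<psi> z"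
    using MVT2[of 0 h \<phi> \<psi>] dphi h by force
  have "\<psi> z > 0" using d z h \<open>\<psi> 0 = 0\<close> by force
  then have "\<phi> h > \<phi> 0" using z h by (smt (verit) mult_pos_pos)
  moreover have "\<phi> h \<le> \<phi> 0" using mx inS[of h] h unfolding \<phi>_def by simp
  ultimately show False by simp
qed

lemma open_sets_lebesgue: "open (S::(real^'n::finite) set) \<Longrightarrow> S \<in> sets lebesgue"
  by (simp add: borel_open sets_completionI_sets)

lemma cont_closure_integrable:
  fixes f :: "real^'n::finite \<Rightarrow> real"
  assumes bO: "bounded \<Omega>" and oO: "open \<Omega>" and c: "continuous_on (closure \<Omega>) f"
  shows "f integrable_on \<Omega>"
proof -
  have "compact (f ` closure \<Omega>)" using bO c compact_closure compact_continuous_image by blast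
  then obtain Bd where Bd: "\<forall>x\<in>closure \<Omega>. norm (f x) \<le> Bd"
    using compact_imp_bounded bounded_iff by (metis image_eqI)
  have m: "f \<in> borel_measurable (lebesgue_on \<Omega>)"
    using continuous_imp_measurable_on_sets_lebesgue[OF continuous_on_subset[OF c closure_subset]]
      open_sets_lebesgue[OF oO] by blast
  have "f absolutely_integrable_on \<Omega>"
    apply (rule measurable_bounded_by_integrable_imp_absolutely_integrable[OF m open_sets_lebesgue[OF oO], of "\<lambda>_. Bd"])
    using integrable_on_const lmeasurable_open[OF bO oO] apply blast
    using Bd closure_subset by blast
  then show ?thesis using set_lebesgue_integral_eq_integral(1) by blast
qed

lemma slice_cont:
  fixes h :: "(real^'n::finite) \<times> real \<Rightarrow> real"
  assumes "continuous_on (A \<times> I) h" "t \<in> I"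
  shows "continuous_on A (\<lambda>x. h (x, t))"
  by (rule continuous_on_compose2[OF assms(1)]) (use assms(2) in \<open>auto intro!: continuous_intros\<close>)

lemma param_cont:
  fixes h :: "(real^'n::finite) \<times> real \<Rightarrow> real"
  assumes bO: "bounded \<Omega>" and oO: "open \<Omega>" and hc: "continuous_on (closure \<Omega> \<times> {0..}) h"
  shows "continuous_on {0..} (\<lambda>t. integral \<Omega> (\<lambda>x. h (x,t)))"
  unfolding continuous_on_iff
proof (intro ballI allI impI)
  fix t :: real and e :: real
  assume t: "t \<in> {0..}" and e: "0 < e"
  define K where "K = closure \<Omega> \<times> {0..t+1}"
  have "compact K" unfolding K_def using bO by (simp add: compact_Times compact_closure)
  moreover have "continuous_on K h" using hc unfolding K_def
    by (rule continuous_on_subset) auto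
  ultimately have uc: "uniformly_continuous_on K h" using compact_uniformly_continuous by blast
  define m where "m = measure lebesgue \<Omega>"
  have m0: "m \<ge> 0" unfolding m_def by simp
  define e' where "e' = e / (m + 1)"
  have e': "e' > 0" unfolding e'_def using e m0 by simp
  obtain d0 where d0: "d0 > 0" "\<forall>x\<in>K. \<forall>x'\<in>K. dist x' x < d0 \<longrightarrow> dist (h x') (h x) < e'"
    using uc e' unfolding uniformly_continuous_on_def by blast
  show "\<exists>d>0. \<forall>s\<in>{0..}. dist s t < d \<longrightarrow>
          dist (integral \<Omega> (\<lambda>x. h (x, s))) (integral \<Omega> (\<lambda>x. h (x, t))) < e"
  proof (intro exI[of _ "min d0 1"] conjI ballI impI)
    show "min d0 1 > 0" using d0 by simp
    fix s :: real assume s: "s \<in> {0..}" "dist s t < min d0 1"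
    have int: "(\<lambda>x. h (x, r)) integrable_on \<Omega>" if "r \<in> {0..}" for r
      by (rule cont_closure_integrable[OF bO oO slice_cont[OF hc that]])
    have bnd: "norm (h (x, s) - h (x, t)) \<le> e'" if "x \<in> \<Omega>" for x
    proof -
      have "(x, s) \<in> K" "(x, t) \<in> K" using that s t closure_subset unfolding K_def
        by (auto simp: dist_real_def)
      moreover have "dist (x, s) (x, t) < d0" using s by (simp add: dist_Pair_Pair)
      ultimately have "dist (h (x, s)) (h (x, t)) < e'" using d0 by blast
      then show ?thesis by (simp add: dist_norm)
    qed
    have i1: "(\<lambda>x. h (x, s) - h (x, t)) integrable_on \<Omega>"
      by (rule integrable_diff[OF int int]) (use s t in auto)
    have i2: "(\<lambda>x. e') integrable_on \<Omega>"
      using integrable_on_const lmeasurable_open[OF bO oO] by blast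
    have "norm (integral \<Omega> (\<lambda>x. h (x, s) - h (x, t))) \<le> integral \<Omega> (\<lambda>x. e')"
      by (rule integral_norm_bound_integral[OF i1 i2 bnd])
    also have "integral \<Omega> (\<lambda>x. e') = integral \<Omega> (\<lambda>x. e' * 1)" by simp
    also have "\<dots> = e' * integral \<Omega> (\<lambda>x. 1)" by (rule integral_mult_right)
    also have "\<dots> = e' * m"
      unfolding m_def using lmeasure_integral[OF lmeasurable_open[OF bO oO]] by simp
    also have "e' * m < e" unfolding e'_def using e m0 by (simp add: field_simps)
    finally show "dist (integral \<Omega> (\<lambda>x. h (x, s))) (integral \<Omega> (\<lambda>x. h (x, t))) < e"
      using integral_diff[OF int[OF s(1)] int[OF t]] by (simp add: dist_norm)
  qed
qed

lemma time_bound: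
  fixes D Dh :: "real \<Rightarrow> real" and T :: ereal
  assumes c: "continuous_on {0..} Dh" and nn: "\<forall>t\<ge>0. Dh t \<ge> 0" and eq: "\<forall>t>0. D t = Dh t"
    and t0: "0 \<le> t0" "ereal t0 < T" and B: "0 \<le> B"
    and hyp: "(\<integral>\<^sup>+ t\<in>{t. 0 \<le> t \<and> ereal t < T}. ennreal (D t) \<partial>lborel) \<le> ennreal B"
  shows "integral {0..t0} Dh \<le> B"
proof -
  have ci: "continuous_on {0..t0} Dh" using c by (rule continuous_on_subset) auto
  have hi: "(Dh has_integral integral {0..t0} Dh) {0..t0}"
    using integrable_continuous_real[OF ci] by (simp add: integrable_integral)
  have I: "integral\<^sup>N lborel (\<lambda>x. indicator {0..t0} x * Dh x) = integral {0..t0} Dh"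
    by (rule nn_integral_has_integral_lebesgue[OF _ hi]) (use nn in auto)
  have "integral\<^sup>N lborel (\<lambda>x. indicator {0..t0} x * Dh x)
        = (\<integral>\<^sup>+ x. ennreal (D x) * indicator {0..t0} x \<partial>lborel)"
  proof (rule nn_integral_cong_AE)
    show "AE x in lborel. ennreal (indicator {0..t0} x * Dh x) = ennreal (D x) * indicator {0..t0} x"
      using AE_lborel_singleton[of 0]
    proof (rule AE_mp, intro AE_I2 impI)
      fix x :: real assume "x \<noteq> 0"
      then show "ennreal (indicator {0..t0} x * Dh x) = ennreal (D x) * indicator {0..t0} x"
        using eq by (cases "x \<in> {0..t0}") auto
    qed
  qed
  also have "\<dots> \<le> (\<integral>\<^sup>+ t\<in>{t. 0 \<le> t \<and> ereal t < T}. ennreal (D t) \<partial>lborel)"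
  proof (rule nn_integral_mono)
    fix x :: real
    show "ennreal (D x) * indicator {0..t0} x \<le> ennreal (D x) * indicator {t. 0 \<le> t \<and> ereal t < T} x"
      using t0 by (cases "x \<in> {0..t0}") (auto simp: indicator_def le_less_trans[of "ereal x" "ereal t0" T])
  qed
  also have "\<dots> \<le> ennreal B" by (rule hyp)
  finally have "ennreal (integral {0..t0} Dh) \<le> ennreal B" using I by simp
  then show ?thesis using B by simp
qed

lemma normsq: "(norm (v::real^'n::finite))\<^sup>2 = (\<Sum>i\<in>UNIV. (v$i)\<^sup>2)"
  by (simp add: norm_vec_def L2_set_def sum_nonneg)

theorem lemma2p3:
  fixes \<Omega> :: "(real^'n::finite) set"
    and eps :: "nat \<Rightarrow> real"
    and u0 :: "nat \<Rightarrow> real^'n \<Rightarrow> real"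
    and u :: "nat \<Rightarrow> real^'n \<Rightarrow> real \<Rightarrow> real"
  assumes dom: "smooth_bounded_domain \<Omega>"
    and eps_range: "\<forall>j. 0 < eps j \<and> eps j < 1"
    and eps_dec: "decseq eps"
    and eps_lim: "eps \<longlonglongrightarrow> 0"
    and init: "\<forall>j. init_ok \<Omega> (eps j) (u0 j)"
    and sol: "\<forall>j. classical_sol \<Omega> (eps j) (u0 j) (u j)"
  shows "\<forall>M>0. \<forall>B>0. \<exists>C>0. \<forall>j. \<forall>T::ereal. T > 0 \<longrightarrow>
           (\<forall>x\<in>\<Omega>. u0 j x \<le> M) \<longrightarrow>
           (\<integral>\<^sup>+ t\<in>{t. 0 \<le> t \<and> ereal t < T}.
               ennreal (dirichlet \<Omega> (\<lambda>y. u j y t)) \<partial>lborel) \<le> ennreal B \<longrightarrow>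
           (\<forall>x\<in>\<Omega>. \<forall>t. 0 \<le> t \<and> ereal t < T \<longrightarrow> u j x t \<le> C)"
proof (intro allI impI)
  fix M B :: real assume M: "M > 0" and B: "B > 0"
  have oO: "open \<Omega>" and bO: "bounded \<Omega>" using dom unfolding smooth_bounded_domain_def by auto
  define K where "K = max M 1"
  define C where "C = K * exp B"
  have K1: "K \<ge> 1" "K \<ge> M" unfolding K_def by auto
  have KC: "K \<le> C" unfolding C_def using K1 B by simp
  show "\<exists>C>0. \<forall>j. \<forall>T::ereal. T > 0 \<longrightarrow>
           (\<forall>x\<in>\<Omega>. u0 j x \<le> M) \<longrightarrow>
           (\<integral>\<^sup>+ t\<in>{t. 0 \<le> t \<and> ereal t < T}.
               ennreal (dirichlet \<Omega> (\<lambda>y. u j y t)) \<partial>lborel) \<le> ennreal B \<longrightarrow>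
           (\<forall>x\<in>\<Omega>. \<forall>t. 0 \<le> t \<and> ereal t < T \<longrightarrow> u j x t \<le> C)"
  proof (intro exI[of _ C] conjI allI impI ballI)
    show "C > 0" unfolding C_def using K1 by (intro mult_pos_pos) auto
    fix j and T :: ereal and x0 and t0 :: real
    assume T: "T > 0" and hM: "\<forall>x\<in>\<Omega>. u0 j x \<le> M"
      and hB: "(\<integral>\<^sup>+ t\<in>{t. 0 \<le> t \<and> ereal t < T}.
               ennreal (dirichlet \<Omega> (\<lambda>y. u j y t)) \<partial>lborel) \<le> ennreal B"
      and x0: "x0 \<in> \<Omega>" and t0: "0 \<le> t0 \<and> ereal t0 < T"
    define e where "e = eps j"
    define U where "U = u j"
    have e: "0 < e" "e < 1" using eps_range unfolding e_def by auto
    have cs: "classical_sol \<Omega> e (u0 j) U" using sol unfolding e_def U_def by auto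
    have C21: "C21 \<Omega> U"
      and peq: "\<forall>x\<in>\<Omega>. \<forall>t>0. deriv (U x) t =
         U x t * lap (\<lambda>y. U y t) x + U x t * rho e (dirichlet \<Omega> (\<lambda>y. U y t))"
      and bd: "\<forall>x\<in>frontier \<Omega>. \<forall>t\<ge>0. U x t = e"
      and ini: "\<forall>x\<in>closure \<Omega>. U x 0 = u0 j x"
      using cs unfolding classical_sol_def by blast+
    have Uc: "continuous_on (closure \<Omega> \<times> {0..}) (\<lambda>p. U (fst p) (snd p))"
      and Ud: "\<forall>x\<in>\<Omega>. \<forall>t>0. U x differentiable at t"
      and sd: "\<forall>is. length is < 2 \<longrightarrow>
        (\<forall>x\<in>\<Omega>. \<forall>t>0. iter_pd is (\<lambda>y. U y t) differentiable at x)"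
      and ext: "\<forall>is. length is \<le> 2 \<longrightarrow>
        (\<exists>g. continuous_on (closure \<Omega> \<times> {0..}) g \<and>
           (\<forall>x\<in>\<Omega>. \<forall>t>0. g (x, t) = iter_pd is (\<lambda>y. U y t) x))"
      using C21 unfolding C21_def by blast+
    have "\<forall>i. \<exists>g. continuous_on (closure \<Omega> \<times> {0..}) g \<and>
           (\<forall>x\<in>\<Omega>. \<forall>t>0. g (x, t) = pd i (\<lambda>y. U y t) x)"
    proof
      fix i show "\<exists>g. continuous_on (closure \<Omega> \<times> {0..}) g \<and>
           (\<forall>x\<in>\<Omega>. \<forall>t>0. g (x, t) = pd i (\<lambda>y. U y t) x)"
        using ext[rule_format, of "[i]"] by simp
    qed
    then obtain gg where gg: "\<forall>i. continuous_on (closure \<Omega> \<times> {0..}) (gg i) \<and>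
           (\<forall>x\<in>\<Omega>. \<forall>t>0. gg i (x, t) = pd i (\<lambda>y. U y t) x)" by metis
    define h where "h p = (\<Sum>i\<in>UNIV. (gg i p)\<^sup>2)" for p
    have hc: "continuous_on (closure \<Omega> \<times> {0..}) h"
      unfolding h_def using gg by (auto intro!: continuous_intros)
    have hnn: "h p \<ge> 0" for p unfolding h_def by (simp add: sum_nonneg)
    define Dh where "Dh t = integral \<Omega> (\<lambda>x. h (x, t))" for t
    have Dhc: "continuous_on {0..} Dh" unfolding Dh_def by (rule param_cont[OF bO oO hc])
    have Dhnn: "\<forall>t\<ge>0. Dh t \<ge> 0" unfolding Dh_def
      by (auto intro!: integral_nonneg cont_closure_integrable[OF bO oO slice_cont[OF hc]] hnn)
    have Deq: "\<forall>t>0. dirichlet \<Omega> (\<lambda>y. U y t) = Dh t"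
    proof (intro allI impI)
      fix t :: real assume t: "t > 0"
      show "dirichlet \<Omega> (\<lambda>y. U y t) = Dh t"
        unfolding dirichlet_def Dh_def
      proof (rule integral_cong)
        fix x assume "x \<in> \<Omega>"
        then show "(norm (grad (\<lambda>y. U y t) x))\<^sup>2 = h (x, t)"
          unfolding normsq h_def grad_def using gg t by simp
      qed
    qed
    define gt where "gt s = min (Dh s) (1 / e)" for s
    have gtc: "continuous_on {0..} gt" unfolding gt_def using Dhc by (auto intro!: continuous_intros)
    have gtnn: "\<forall>s\<ge>0. gt s \<ge> 0" unfolding gt_def using Dhnn e by auto
    have gtle: "gt s \<le> Dh s" for s unfolding gt_def by simp
    define G where "G t = integral {0..t} gt" for t
    have gtint: "gt integrable_on {0..t}" for t
      using gtc by (intro integrable_continuous_real, rule continuous_on_subset) auto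
    have Gc: "continuous_on {0..t0} G" unfolding G_def by (rule indefinite_integral_continuous_1[OF gtint])
    have Gnn: "G t \<ge> 0" if "t \<ge> 0" for t
      unfolding G_def by (rule integral_nonneg[OF gtint]) (use gtnn in auto)
    have G0: "G 0 = 0" unfolding G_def by simp
    have Gd: "(G has_real_derivative gt t) (at t)" if "t > 0" for t
    proof -
      have c1: "continuous_on {0..t+1} gt" using gtc by (rule continuous_on_subset) auto
      have "(G has_vector_derivative gt t) (at t within {0..t+1})"
        unfolding G_def using integral_has_vector_derivative[OF c1] that by simp
      moreover have "at t within {0..t+1} = at t" using that by (intro at_within_Icc_at) auto
      ultimately show ?thesis by (simp add: has_real_derivative_iff_has_vector_derivative)
    qed
    have Gle: "G t0 \<le> B"
    proof -
      have Dhint: "Dh integrable_on {0..t0}"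
        using Dhc by (intro integrable_continuous_real, rule continuous_on_subset) auto
      have "G t0 \<le> integral {0..t0} Dh"
        unfolding G_def by (rule integral_le[OF gtint Dhint]) (use gtle in auto)
      also have "\<dots> \<le> B"
        by (rule time_bound[OF Dhc Dhnn, of "\<lambda>t. dirichlet \<Omega> (\<lambda>y. U y t)" t0 T])
          (use Deq t0 B hB in \<open>auto simp: U_def\<close>)
      finally show ?thesis .
    qed
    show "u j x0 t0 \<le> C"
    proof (rule ccontr)
      assume "\<not> u j x0 t0 \<le> C"
      then have big: "U x0 t0 > C" unfolding U_def by simp
      have t0pos: "t0 > 0"
      proof (rule ccontr)
        assume "\<not> t0 > 0"
        then have "t0 = 0" using t0 by simp
        then have "U x0 t0 = u0 j x0" using ini x0 closure_subset by auto
        then show False using big hM x0 K1 KC by force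
      qed
      define w0 where "w0 = U x0 t0 * exp (- G t0)"
      have w0: "w0 > K"
      proof -
        have "exp (- G t0) \<ge> exp (- B)" using Gle by simp
        moreover have "U x0 t0 > 0" using big KC K1 by simp
        ultimately have "w0 \<ge> U x0 t0 * exp (- B)" unfolding w0_def by (simp add: mult_left_mono)
        moreover have "U x0 t0 * exp (- B) > C * exp (- B)" using big by simp
        moreover have "C * exp (- B) = K" unfolding C_def by (simp add: exp_minus field_simps)
        ultimately show ?thesis by simp
      qed
      define \<delta> where "\<delta> = (w0 - K) / (2 * t0)"
      have \<delta>: "\<delta> > 0" unfolding \<delta>_def using w0 t0pos by simp
      define z where "z p = U (fst p) (snd p) * exp (- G (snd p)) - \<delta> * snd p" for p
      define S where "S = closure \<Omega> \<times> {0..t0}"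
      have x0S: "(x0, t0) \<in> S" unfolding S_def using x0 t0 closure_subset by auto
      have cS: "compact S" unfolding S_def using bO by (simp add: compact_Times compact_closure)
      have zc: "continuous_on S z"
      proof -
        have "continuous_on S (\<lambda>p. U (fst p) (snd p))"
          using Uc by (rule continuous_on_subset) (auto simp: S_def)
        moreover have "continuous_on S (\<lambda>p. G (snd p))"
          by (rule continuous_on_compose2[OF Gc continuous_on_snd]) (auto simp: S_def)
        ultimately show ?thesis unfolding z_def by (auto intro!: continuous_intros)
      qed
      obtain ps where ps: "ps \<in> S" "\<forall>y\<in>S. z y \<le> z ps"
        using continuous_attains_sup[OF cS _ zc] x0S by blast
      obtain xs ts where pst: "ps = (xs, ts)" by fastforce
      have xs: "xs \<in> closure \<Omega>" and ts: "0 \<le> ts" "ts \<le> t0" using ps pst unfolding S_def by auto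
      have "z (x0, t0) = w0 - (w0 - K) / 2" unfolding z_def w0_def \<delta>_def using t0pos by simp
      moreover have "z (x0, t0) \<le> z (xs, ts)" using ps pst x0S by auto
      moreover have "w0 - (w0 - K) / 2 > K" using w0 by (simp add: field_simps)
      ultimately have zbig: "z (xs, ts) > K" by linarith
      have "\<delta> * ts \<ge> 0" using \<delta> ts by simp
      then have wbig: "U xs ts * exp (- G ts) > K" using zbig unfolding z_def by simp
      have xsO: "xs \<in> \<Omega>"
      proof (rule ccontr)
        assume "xs \<notin> \<Omega>"
        then have "xs \<in> frontier \<Omega>" using xs oO by (simp add: frontier_def interior_open)
        then have "U xs ts = e" using bd ts by auto
        moreover have "exp (- G ts) \<le> 1" using Gnn[OF ts(1)] by simp
        ultimately have "U xs ts * exp (- G ts) \<le> e" using e by (simp add: mult_left_le)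
        then show False using wbig e K1 by simp
      qed
      have tspos: "ts > 0"
      proof (rule ccontr)
        assume "\<not> ts > 0"
        then have "ts = 0" using ts by simp
        then have "U xs ts * exp (- G ts) = u0 j xs" using ini xs G0 by simp
        then show False using wbig hM xsO K1 by force
      qed
      define E where "E = exp (- G ts)"
      have Epos: "E > 0" unfolding E_def by simp
      have Upos: "U xs ts > 0" using wbig K1 Epos unfolding E_def
        by (smt (verit) mult_nonpos_nonneg exp_gt_zero)
      have smax: "\<forall>y\<in>\<Omega>. U y ts \<le> U xs ts"
      proof
        fix y assume y: "y \<in> \<Omega>"
        have "(y, ts) \<in> S" unfolding S_def using y ts closure_subset by auto
        then have "z (y, ts) \<le> z (xs, ts)" using ps pst by auto
        then have "U y ts * E \<le> U xs ts * E" unfolding z_def E_def by simp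
        then show "U y ts \<le> U xs ts" using Epos by simp
      qed
      have lapneg: "lap (\<lambda>y. U y ts) xs \<le> 0"
        unfolding lap_def
      proof (rule sum_nonpos)
        fix i
        show "pd i (pd i (\<lambda>y. U y ts)) xs \<le> 0"
        proof (rule second_deriv_max[OF oO xsO])
          show "\<forall>y\<in>\<Omega>. U y ts \<le> U xs ts" by (rule smax)
          show "\<forall>y\<in>\<Omega>. (\<lambda>y. U y ts) differentiable at y"
            using sd[rule_format, of "[]"] tspos by simp
          show "pd i (\<lambda>y. U y ts) differentiable at xs"
            using sd[rule_format, of "[i]"] tspos xsO by simp
        qed
      qed
      define \<zeta> where "\<zeta> t = U xs t * exp (- G t) - \<delta> * t" for t
      have dU: "(U xs has_real_derivative deriv (U xs) ts) (at ts)"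
        using Ud xsO tspos DERIV_deriv_iff_real_differentiable by blast
      have d\<zeta>: "(\<zeta> has_real_derivative
          (deriv (U xs) ts * exp (- G ts) + U xs ts * (exp (- G ts) * (- gt ts)) - \<delta>)) (at ts)"
      proof -
        have "((\<lambda>t. - G t) has_real_derivative - gt ts) (at ts)"
          by (rule DERIV_minus[OF Gd[OF tspos]])
        then have dE: "((\<lambda>t. exp (- G t)) has_real_derivative exp (- G ts) * (- gt ts)) (at ts)"
          by (rule DERIV_fun_exp)
        have dl: "((\<lambda>t. \<delta> * t) has_real_derivative \<delta>) (at ts)"
          using DERIV_cmult_Id[of \<delta> ts] by simp
        show ?thesis unfolding \<zeta>_def
          using DERIV_diff[OF DERIV_mult[OF dU dE] dl] by (simp add: algebra_simps)
      qed
      have "deriv (U xs) ts = U xs ts * lap (\<lambda>y. U y ts) xs + U xs ts * gt ts"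
        using peq xsO tspos Deq unfolding gt_def rho_def by auto
      then have "deriv (U xs) ts * exp (- G ts) + U xs ts * (exp (- G ts) * (- gt ts)) - \<delta>
          = E * (U xs ts * lap (\<lambda>y. U y ts) xs) - \<delta>" unfolding E_def by (simp add: algebra_simps)
      also have "\<dots> < 0"
        using Epos Upos lapneg \<delta> by (smt (verit) mult_nonneg_nonpos mult_pos_pos)
      finally obtain d where d: "d > 0" "\<forall>k>0. k < d \<longrightarrow> \<zeta> ts < \<zeta> (ts - k)"
        using DERIV_neg_dec_left[OF d\<zeta>] by blast
      define k where "k = min d ts / 2"
      have k: "0 < k" "k < d" "k < ts" using d tspos unfolding k_def by auto
      have "(xs, ts - k) \<in> S" unfolding S_def using xs k ts by auto
      then have "z (xs, ts - k) \<le> z (xs, ts)" using ps pst by auto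
      moreover have "\<zeta> ts < \<zeta> (ts - k)" using d k by blast
      ultimately show False unfolding z_def \<zeta>_def by simp
    qed
  qed
qed

end
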